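(* In the setting of the context, assume $q<q_c$. Then $\lim_{\hat q\to q,\ \hat q\in[0,q_c)}\hat P=P$, where $P$ and $\hat P$ are the positive definite solutions of the modified Riccati equations with parameters $q$ and $\hat q$ respectively.
   Context: Let $A\in\mathbb{R}^{n\times n}$, $B\in\mathbb{R}^{n\times m}$ with $(A,B)$ stabilizable, and let $Q$, $R$ be symmetric positive definite, and $q\in(0,1)$. For $p\in[0,1)$ the modified Riccati equation with parameter $p$ is $X=Q+A^\top XA-(1-p)A^\top XB(R+B^\top XB)^{-1}B^\top XA$; $q_c$ is the critical loss probability such that for every $p\in[0,q_c)$ this equation has a unique positive definite solution. *)

theory Defs
  imports "HOL-Analysis.Analysis"
begin

definition sym_mat :: "real^'n^'n \<Rightarrow> bool" where
  "sym_mat M \<longleftrightarrow> transpose M = M"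

definition pos_def :: "real^'n^'n \<Rightarrow> bool" where
  "pos_def M \<longleftrightarrow> sym_mat M \<and> (\<forall>x. x \<noteq> 0 \<longrightarrow> x \<bullet> (M *v x) > 0)"

definition cmat :: "real^'m^'n \<Rightarrow> complex^'m^'n" where
  "cmat M = (\<chi> i j. complex_of_real (M $ i $ j))"

definition schur_stable :: "real^'n^'n \<Rightarrow> bool" where
  "schur_stable M \<longleftrightarrow>
     (\<forall>(l::complex) (v::complex^'n). v \<noteq> 0 \<and> cmat M *v v = l *s v \<longrightarrow> cmod l < 1)"

definition stabilizable :: "real^'n^'n \<Rightarrow> real^'m^'n \<Rightarrow> bool" where
  "stabilizable A B \<longleftrightarrow> (\<exists>K :: real^'n^'m. schur_stable (A + B ** K))"

text \<open>Modified algebraic Riccati equation with loss parameter p.\<close>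
definition mare :: "real^'n^'n \<Rightarrow> real^'m^'n \<Rightarrow> real^'n^'n \<Rightarrow> real^'m^'m \<Rightarrow> real
                    \<Rightarrow> real^'n^'n \<Rightarrow> bool" where
  "mare A B Q R p X \<longleftrightarrow>
     X = Q + transpose A ** X ** A
         - (1 - p) *\<^sub>R (transpose A ** X ** B ** matrix_inv (R + transpose B ** X ** B)
                          ** transpose B ** X ** A)"

text \<open>The positive definite solution (meaningful when it exists uniquely).\<close>
definition mare_sol :: "real^'n^'n \<Rightarrow> real^'m^'n \<Rightarrow> real^'n^'n \<Rightarrow> real^'m^'m \<Rightarrow> real
                    \<Rightarrow> real^'n^'n" where
  "mare_sol A B Q R p = (THE X. pos_def X \<and> mare A B Q R p X)"

end

theory Submission
  imports Defs
begin


definition qf :: "real^'n^'n \<Rightarrow> real^'n \<Rightarrow> real" where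
  "qf M x = x \<bullet> (M *v x)"

lemma qf_add: "qf (M + N) x = qf M x + qf N x"
  by (simp add: qf_def matrix_vector_mult_add_rdistrib inner_add_right)
lemma qf_diff: "qf (M - N) x = qf M x - qf N x"
  by (simp add: qf_def matrix_vector_mult_diff_rdistrib inner_diff_right)
lemma scaleR_mv: "(c *\<^sub>R M) *v x = c *\<^sub>R (M *v (x::real^_))"
  by (simp add: matrix_vector_mult_def vec_eq_iff sum_distrib_left mult.assoc)
lemma qf_scaleR: "qf (c *\<^sub>R M) x = c * qf M x"
  by (simp add: qf_def scaleR_mv)

lemma dot_transpose: "a \<bullet> (transpose C *v b) = (C *v a) \<bullet> (b::real^_)"
  by (metis dot_lmul_matrix inner_commute transpose_matrix_vector vector_transpose_matrix)

lemma dot_sym: "sym_mat X \<Longrightarrow> a \<bullet> (X *v b) = (X *v a) \<bullet> b"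
  by (metis dot_transpose sym_mat_def)

lemma qf_congr: "qf (transpose C ** X ** C) x = qf X (C *v x)"
proof -
  have "qf (transpose C ** X ** C) x = x \<bullet> (transpose C *v (X *v (C *v x)))"
    by (simp only: qf_def matrix_vector_mul_assoc matrix_mul_assoc)
  also have "\<dots> = qf X (C *v x)" by (simp only: dot_transpose qf_def)
  finally show ?thesis .
qed

lemma transpose_add: "transpose (A + B) = transpose A + transpose (B::real^_^_)"
  by (simp add: transpose_def vec_eq_iff)
lemma transpose_diff: "transpose (A - B) = transpose A - transpose (B::real^_^_)"
  by (simp add: transpose_def vec_eq_iff)

lemma qf_smult: "qf M (c *\<^sub>R x) = c^2 * qf M x"
  by (simp add: qf_def matrix_vector_mult_scaleR power2_eq_square)


lemma qf_upper: "\<exists>C>0. \<forall>x. \<bar>qf M x\<bar> \<le> C * norm x ^ 2"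
proof -
  let ?C = "onorm ((*v) M) + 1"
  have on: "norm (M *v x) \<le> onorm ((*v) M) * norm x" for x
    using onorm[OF matrix_vector_mul_bounded_linear] by blast
  have "0 \<le> onorm ((*v) M)" by (simp add: onorm_pos_le[OF matrix_vector_mul_bounded_linear])
  then have C: "?C > 0" by simp
  have "\<bar>qf M x\<bar> \<le> ?C * norm x ^ 2" for x
  proof -
    have "\<bar>qf M x\<bar> \<le> norm x * norm (M *v x)" unfolding qf_def by (rule Cauchy_Schwarz_ineq2)
    also have "\<dots> \<le> norm x * (onorm ((*v) M) * norm x)" by (rule mult_left_mono[OF on]) simp
    also have "\<dots> \<le> ?C * norm x ^ 2" by (simp add: power2_eq_square algebra_simps)
    finally show ?thesis .
  qed
  with C show ?thesis by blast
qed

lemma qf_lower: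
  assumes "pos_def M"
  shows "\<exists>l>0. \<forall>x. l * norm x ^ 2 \<le> qf M x"
proof -
  have pd: "x \<noteq> 0 \<Longrightarrow> qf M x > 0" for x using assms by (simp add: pos_def_def qf_def)
  obtain i :: 'a where True by blast
  have ne: "sphere (0::real^'a) 1 \<noteq> {}"
    by (metis empty_iff mem_sphere_0 norm_axis_1)
  have cont: "continuous_on (sphere 0 1) (qf M)"
    unfolding qf_def by (intro continuous_intros)
  obtain x0 where x0: "x0 \<in> sphere 0 1" "\<And>y. y \<in> sphere 0 1 \<Longrightarrow> qf M x0 \<le> qf M y"
    using continuous_attains_inf[OF compact_sphere ne cont] by blast
  have "x0 \<noteq> 0" using x0 by auto
  then have l: "qf M x0 > 0" by (rule pd)
  have "qf M x0 * norm x ^ 2 \<le> qf M x" for x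
  proof (cases "x = 0")
    case True then show ?thesis by (simp add: qf_def)
  next
    case False
    let ?y = "(1 / norm x) *\<^sub>R x"
    have "?y \<in> sphere 0 1" using False by simp
    then have "qf M x0 \<le> qf M ?y" by (rule x0(2))
    also have "\<dots> = qf M x / norm x ^ 2" by (simp add: qf_smult power2_eq_square)
    finally show ?thesis using False by (simp add: field_simps)
  qed
  with l show ?thesis by blast
qed


lemma pd_invertible:
  fixes M :: "real^'m^'m"
  assumes "\<And>v. v \<noteq> 0 \<Longrightarrow> qf M v > 0"
  shows "invertible M" "M ** matrix_inv M = mat 1" "matrix_inv M ** M = mat 1"
proof -
  have lin: "linear ((*v) M)" by simp
  have inj: "inj ((*v) M)"
    unfolding linear_injective_0[OF lin]
  proof (intro allI impI)
    fix v assume "M *v v = 0"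
    then have "qf M v = 0" by (simp add: qf_def)
    then show "v = 0" using assms by fastforce
  qed
  have "surj ((*v) M)" using linear_inj_imp_surj[OF lin inj] .
  with inj show inv: "invertible M" by (simp add: invertible_eq_bij bij_def)
  then have "\<exists>A'. M ** A' = mat 1 \<and> A' ** M = mat 1" by (simp add: invertible_def)
  then have "M ** matrix_inv M = mat 1 \<and> matrix_inv M ** M = mat 1"
    unfolding matrix_inv_def by (rule someI_ex)
  then show "M ** matrix_inv M = mat 1" "matrix_inv M ** M = mat 1" by auto
qed

lemma key:
  fixes X :: "real^'n^'n" and B :: "real^'m^'n" and R :: "real^'m^'m"
  assumes symX: "sym_mat X" and psdX: "\<And>v. 0 \<le> qf X v" and R: "pos_def R"
  defines "M \<equiv> R + transpose B ** X ** B"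
  defines "G \<equiv> matrix_inv M"
  shows "M ** G = mat 1" "G ** M = mat 1" "sym_mat M"
    and "\<And>v. 0 \<le> qf M v"
    and "\<And>u v. qf X (u + B *v v) + qf R v =
            qf X u - (transpose B *v (X *v u)) \<bullet> (G *v (transpose B *v (X *v u)))
            + qf M (v + G *v (transpose B *v (X *v u)))"
    and "\<And>w. 0 \<le> w \<bullet> (G *v w)"
proof -
  have qM: "qf M v = qf R v + qf X (B *v v)" for v
    by (simp add: M_def qf_add qf_congr)
  have Rp: "v \<noteq> 0 \<Longrightarrow> qf R v > 0" for v using R by (simp add: pos_def_def qf_def)
  have "v \<noteq> 0 \<Longrightarrow> qf M v > 0" for v using qM Rp[of v] psdX[of "B *v v"] by simp
  note inv = pd_invertible[OF this]
  show MG: "M ** G = mat 1" and GM: "G ** M = mat 1" using inv by (auto simp: G_def)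
  have tX: "transpose X = X" using symX by (simp add: sym_mat_def)
  have tR: "transpose R = R" using R by (simp add: pos_def_def sym_mat_def)
  show symM: "sym_mat M"
    by (simp add: sym_mat_def M_def transpose_add matrix_transpose_mul tX tR matrix_mul_assoc)
  show psdM: "0 \<le> qf M v" for v
    using qM Rp[of v] psdX[of "B *v v"] by (cases "v = 0") (auto simp: qf_def)
  show "0 \<le> w \<bullet> (G *v w)" for w
  proof -
    have "w = M *v (G *v w)" by (simp add: matrix_vector_mul_assoc MG)
    then have "w \<bullet> (G *v w) = qf M (G *v w)" by (metis qf_def inner_commute)
    then show ?thesis using psdM by simp
  qed
  show "qf X (u + B *v v) + qf R v =
            qf X u - (transpose B *v (X *v u)) \<bullet> (G *v (transpose B *v (X *v u)))
            + qf M (v + G *v (transpose B *v (X *v u)))" for u v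
  proof -
    define w where "w = transpose B *v (X *v u)"
    have e2: "(B *v v) \<bullet> (X *v u) = w \<bullet> v"
      using dot_transpose[of v B "X *v u"] by (simp only: w_def inner_commute)
    have e1: "u \<bullet> (X *v (B *v v)) = w \<bullet> v"
      using dot_sym[OF symX, of u "B *v v"] e2 by (simp only: inner_commute)
    have e3: "(B *v v) \<bullet> (X *v (B *v v)) = qf (transpose B ** X ** B) v"
      using qf_congr[of B X v] unfolding qf_def by (rule sym)
    have lhs: "qf X (u + B *v v) + qf R v = qf X u + 2 * (w \<bullet> v) + qf M v"
      by (simp add: qf_def M_def matrix_vector_right_distrib inner_add_left inner_add_right
            e1 e2 e3 qf_add matrix_vector_mult_add_rdistrib)
    have f1: "v \<bullet> (M *v (G *v w)) = v \<bullet> w" by (simp add: matrix_vector_mul_assoc MG)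
    have f2: "(G *v w) \<bullet> (M *v v) = v \<bullet> w"
      using dot_sym[OF symM, of "G *v w" v] f1 by (simp only: inner_commute)
    have f3: "(G *v w) \<bullet> (M *v (G *v w)) = w \<bullet> (G *v w)"
      by (simp add: matrix_vector_mul_assoc MG inner_commute)
    have rhs: "qf M (v + G *v w) = qf M v + 2 * (w \<bullet> v) + w \<bullet> (G *v w)"
      by (simp add: qf_def matrix_vector_right_distrib inner_add_left inner_add_right
            f1 f2 f3 inner_commute)
    show ?thesis unfolding w_def[symmetric] lhs rhs by simp
  qed
qed



lemma abstract_iter:
  fixes d y qq :: "'a \<Rightarrow> real"
  assumes ab: "0 \<le> a" "0 \<le> b"
    and hd: "\<And>x. d x \<ge> a * d (f1 x) + b * d (f2 x)"
    and hy: "\<And>x. y x \<ge> qq x + a * y (f1 x) + b * y (f2 x)"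
    and hq: "\<And>x. qq x \<ge> e * y x" and e: "0 < e" "e \<le> 1"
    and c: "0 \<le> c" and hc: "\<And>x. d x + c * y x \<ge> 0"
    and y0: "\<And>x. y x \<ge> 0"
  shows "d x \<ge> 0"
proof -
  have it: "\<forall>x. d x + (c * (1 - e) ^ k) * y x \<ge> 0" for k
  proof (induction k)
    case 0 then show ?case using hc by simp
  next
    case (Suc k)
    define ck where "ck = c * (1 - e) ^ k"
    have ck0: "ck \<ge> 0" using c e by (simp add: ck_def)
    have IH: "\<And>x. 0 \<le> d x + ck * y x" using Suc.IH unfolding ck_def by blast
    show ?case
    proof
      fix x
      have h1: "0 \<le> a * (d (f1 x) + ck * y (f1 x))" using IH ab by simp
      have h2: "0 \<le> b * (d (f2 x) + ck * y (f2 x))" using IH ab by simp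
      have h3: "ck * (a * y (f1 x) + b * y (f2 x)) \<le> ck * (y x - qq x)"
        using hy[of x] ck0 by (intro mult_left_mono) auto
      have h4: "ck * (e * y x) \<le> ck * qq x" using hq[of x] ck0 by (intro mult_left_mono) auto
      have "0 \<le> d x + ck * ((1 - e) * y x)"
        using hd[of x] h1 h2 h3 h4 by (simp add: algebra_simps)
      then show "0 \<le> d x + (c * (1 - e) ^ Suc k) * y x" by (simp add: ck_def algebra_simps)
    qed
  qed
  show ?thesis
  proof (rule ccontr)
    assume "\<not> 0 \<le> d x"
    then have neg: "- d x > 0" by simp
    have "(\<lambda>k. (c * (1 - e) ^ k) * y x) \<longlonglongrightarrow> (c * 0) * y x"
      using e by (intro tendsto_intros LIMSEQ_power_zero) auto
    then have "(\<lambda>k. (c * (1 - e) ^ k) * y x) \<longlonglongrightarrow> 0" by simp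
    from order_tendstoD(2)[OF this neg] obtain k where "(c * (1 - e) ^ k) * y x < - d x"
      by (auto simp: eventually_sequentially)
    with spec[OF it[of k], of x] show False by linarith
  qed
qed



lemma pd_psd: "pos_def X \<Longrightarrow> 0 \<le> qf X v"
  by (cases "v = 0") (auto simp: pos_def_def qf_def less_imp_le)

lemma pd_sym: "pos_def X \<Longrightarrow> sym_mat X"
  by (simp add: pos_def_def)

lemma mare_expand:
  assumes "mare A B Q R p X" "sym_mat X"
  shows "qf X x = qf Q x + qf X (A *v x)
     - (1 - p) * ((transpose B *v (X *v (A *v x))) \<bullet>
          (matrix_inv (R + transpose B ** X ** B) *v (transpose B *v (X *v (A *v x)))))"
proof -
  define G where "G = matrix_inv (R + transpose B ** X ** B)"
  define w where "w = transpose B *v (X *v (A *v x))"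
  define S where "S = transpose A ** X ** B ** G ** transpose B ** X ** A"
  have X: "X = Q + transpose A ** X ** A - (1 - p) *\<^sub>R S"
    using assms(1) by (simp add: mare_def S_def G_def)
  have "qf X x = qf Q x + qf X (A *v x) - (1 - p) * qf S x"
    by (subst X) (simp add: qf_add qf_diff qf_scaleR qf_congr)
  moreover have "qf S x = w \<bullet> (G *v w)"
  proof -
    have "qf S x = x \<bullet> (transpose A *v (X *v (B *v (G *v w))))"
      by (simp only: qf_def S_def w_def matrix_vector_mul_assoc[symmetric])
    also have "\<dots> = (A *v x) \<bullet> (X *v (B *v (G *v w)))" by (rule dot_transpose)
    also have "\<dots> = (X *v (A *v x)) \<bullet> (B *v (G *v w))" by (rule dot_sym[OF assms(2)])
    also have "\<dots> = (G *v w) \<bullet> w"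
      using dot_transpose[of "G *v w" B "X *v (A *v x)"] by (simp only: w_def inner_commute)
    finally show ?thesis by (simp only: inner_commute)
  qed
  ultimately show ?thesis by (simp add: w_def G_def)
qed

lemma ric:
  fixes X :: "real^'n^'n" and B :: "real^'m^'n" and R :: "real^'m^'m" and A :: "real^'n^'n"
    and x :: "real^'n"
  assumes X: "pos_def X" and R: "pos_def R"
  defines "G \<equiv> matrix_inv (R + transpose B ** X ** B)"
  defines "w \<equiv> transpose B *v (X *v (A *v x))"
  shows "0 \<le> w \<bullet> (G *v w)"
    and "\<And>v. qf X (A *v x) - w \<bullet> (G *v w) \<le> qf X (A *v x + B *v v) + qf R v"
    and "qf X (A *v x) - w \<bullet> (G *v w) = qf X (A *v x + B *v (- (G *v w))) + qf R (- (G *v w))"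
proof -
  note k = key[OF pd_sym[OF X] pd_psd[OF X] R, where B=B]
  show "0 \<le> w \<bullet> (G *v w)" using k(6) by (simp add: G_def)
  show "qf X (A *v x) - w \<bullet> (G *v w) \<le> qf X (A *v x + B *v v) + qf R v" for v
    using k(5)[of "A *v x" v] k(4)[of "v + G *v w"] by (simp add: G_def w_def)
  show "qf X (A *v x) - w \<bullet> (G *v w) = qf X (A *v x + B *v (- (G *v w))) + qf R (- (G *v w))"
    using k(5)[of "A *v x" "- (G *v w)"] by (simp add: G_def w_def qf_def)
qed

lemma lower:
  assumes X: "pos_def X" and R: "pos_def R" and m: "mare A B Q R p X" and p: "0 \<le> p" "p \<le> 1"
  shows "qf Q x \<le> qf X x"
proof -
  note e = mare_expand[OF m pd_sym[OF X], of x]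
  note r = ric[OF X R, where B=B and A=A and x=x]
  let ?s = "(transpose B *v (X *v (A *v x))) \<bullet>
          (matrix_inv (R + transpose B ** X ** B) *v (transpose B *v (X *v (A *v x))))"
  have s0: "0 \<le> ?s" using r(1) by simp
  have d0: "0 \<le> qf X (A *v x) - ?s" using r(3) pd_psd[OF X] pd_psd[OF R] by (metis add_nonneg_nonneg)
  have "qf X x = qf Q x + p * qf X (A *v x) + (1 - p) * (qf X (A *v x) - ?s)"
    using e by (simp add: algebra_simps)
  moreover have "0 \<le> p * qf X (A *v x)" using p pd_psd[OF X] by simp
  moreover have "0 \<le> (1 - p) * (qf X (A *v x) - ?s)" using p d0 by simp
  ultimately show ?thesis by linarith
qed



lemma mono_sol:
  fixes A :: "real^'n^'n" and B :: "real^'m^'n" and R :: "real^'m^'m"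
  assumes Q: "pos_def Q" and R: "pos_def R" and X: "pos_def X" and Y: "pos_def Y"
    and mX: "mare A B Q R p X" and mY: "mare A B Q R p' Y"
    and p: "0 \<le> p" "p \<le> p'" "p' \<le> 1"
  shows "qf X x \<le> qf Y x"
proof -
  define GY where "GY = matrix_inv (R + transpose B ** Y ** B)"
  define GX where "GX = matrix_inv (R + transpose B ** X ** B)"
  define wY where "wY x = transpose B *v (Y *v (A *v x))" for x
  define wX where "wX x = transpose B *v (X *v (A *v x))" for x
  define k where "k x = - (GY *v wY x)" for x
  define f1 where "f1 x = A *v x" for x
  define f2 where "f2 x = A *v x + B *v k x" for x
  have hY: "qf Y x \<ge> qf Q x + p * qf Y (f1 x) + (1 - p) * (qf Y (f2 x) + qf R (k x))" for x
  proof -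
    note e = mare_expand[OF mY pd_sym[OF Y], of x]
    note r = ric[OF Y R, where B=B and A=A and x=x]
    have s0: "0 \<le> wY x \<bullet> (GY *v wY x)" using r(1) by (simp add: wY_def GY_def)
    have eq: "qf Y (A *v x) - wY x \<bullet> (GY *v wY x) = qf Y (f2 x) + qf R (k x)"
      using r(3) by (simp add: wY_def GY_def f2_def k_def)
    have e': "qf Y x = qf Q x + qf Y (A *v x) - (1 - p') * (wY x \<bullet> (GY *v wY x))"
      using e by (simp add: wY_def GY_def)
    have "(1 - p') * (wY x \<bullet> (GY *v wY x)) \<le> (1 - p) * (wY x \<bullet> (GY *v wY x))"
      using s0 p by (intro mult_right_mono) auto
    then have "qf Y x \<ge> qf Q x + p * qf Y (A *v x) + (1 - p) * (qf Y (A *v x) - wY x \<bullet> (GY *v wY x))"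
      using e' by (simp add: algebra_simps)
    then show ?thesis unfolding eq f1_def .
  qed
  have hX: "qf X x \<le> qf Q x + p * qf X (f1 x) + (1 - p) * (qf X (f2 x) + qf R (k x))" for x
  proof -
    note e = mare_expand[OF mX pd_sym[OF X], of x]
    note r = ric[OF X R, where B=B and A=A and x=x]
    have le: "qf X (A *v x) - wX x \<bullet> (GX *v wX x) \<le> qf X (f2 x) + qf R (k x)"
      using r(2)[of "k x"] by (simp add: wX_def GX_def f2_def)
    have e': "qf X x = qf Q x + p * qf X (A *v x) + (1 - p) * (qf X (A *v x) - wX x \<bullet> (GX *v wX x))"
      using e by (simp add: wX_def GX_def algebra_simps)
    have "(1 - p) * (qf X (A *v x) - wX x \<bullet> (GX *v wX x)) \<le> (1 - p) * (qf X (f2 x) + qf R (k x))"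
      using le p by (intro mult_left_mono) auto
    then show ?thesis using e' unfolding f1_def by linarith
  qed
  define d where "d x = qf Y x - qf X x" for x
  have hd: "d x \<ge> p * d (f1 x) + (1 - p) * d (f2 x)" for x
    using hY[of x] hX[of x] by (simp add: d_def algebra_simps)
  have hy: "qf Y x \<ge> qf Q x + p * qf Y (f1 x) + (1 - p) * qf Y (f2 x)" for x
  proof -
    have "0 \<le> (1 - p) * qf R (k x)" using p pd_psd[OF R] by simp
    then show ?thesis using hY[of x] by (simp add: algebra_simps)
  qed
  obtain lQ where lQ: "lQ > 0" "\<And>x. lQ * norm x ^ 2 \<le> qf Q x" using qf_lower[OF Q] by blast
  obtain lY where lY: "lY > 0" "\<And>x. lY * norm x ^ 2 \<le> qf Y x" using qf_lower[OF Y] by blast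
  obtain CY where CY: "CY > 0" "\<And>x. \<bar>qf Y x\<bar> \<le> CY * norm x ^ 2" using qf_upper by blast
  obtain CX where CX: "CX > 0" "\<And>x. \<bar>qf X x\<bar> \<le> CX * norm x ^ 2" using qf_upper by blast
  define e where "e = min 1 (lQ / CY)"
  have e: "0 < e" "e \<le> 1" using lQ CY by (auto simp: e_def)
  have hq: "qf Q x \<ge> e * qf Y x" for x
  proof -
    have "e * qf Y x \<le> e * (CY * norm x ^ 2)" using CY(2)[of x] e by (intro mult_left_mono) auto
    also have "\<dots> = e * CY * norm x ^ 2" by simp
    also have "\<dots> \<le> (lQ / CY) * CY * norm x ^ 2"
      using CY(1) by (intro mult_right_mono) (auto simp: e_def)
    also have "\<dots> = lQ * norm x ^ 2" using CY by simp
    finally show ?thesis using lQ(2)[of x] by linarith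
  qed
  define c where "c = CX / lY"
  have c: "0 \<le> c" using CX lY by (simp add: c_def)
  have hc: "d x + c * qf Y x \<ge> 0" for x
  proof -
    have "CX * norm x ^ 2 = c * (lY * norm x ^ 2)" using lY by (simp add: c_def)
    also have "\<dots> \<le> c * qf Y x" using lY(2)[of x] c by (intro mult_left_mono) auto
    finally have "qf X x \<le> c * qf Y x" using CX(2)[of x] by linarith
    then show ?thesis using pd_psd[OF Y, of x] by (simp add: d_def)
  qed
  have "d x \<ge> 0"
    by (rule abstract_iter[where a=p and b="1-p" and y="qf Y" and qq="qf Q"
          and e=e and c=c, OF _ _ hd hy hq e c hc pd_psd[OF Y]]) (use p in auto)
  then show ?thesis by (simp add: d_def)
qed



lemma tendsto_matmul [tendsto_intros]:
  fixes f :: "'a \<Rightarrow> real^'n^'m" and g :: "'a \<Rightarrow> real^'k^'n"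
  assumes "(f \<longlongrightarrow> A) F" "(g \<longlongrightarrow> B) F"
  shows "((\<lambda>x. f x ** g x) \<longlongrightarrow> A ** B) F"
  by (rule vec_tendstoI, rule vec_tendstoI)
     (simp add: matrix_matrix_mult_def, intro tendsto_intros assms)

lemma tendsto_transpose [tendsto_intros]:
  fixes f :: "'a \<Rightarrow> real^'n^'m"
  assumes "(f \<longlongrightarrow> A) F"
  shows "((\<lambda>x. transpose (f x)) \<longlongrightarrow> transpose A) F"
  by (rule vec_tendstoI, rule vec_tendstoI)
     (simp add: transpose_def, intro tendsto_intros assms)

lemma tendsto_mv [tendsto_intros]:
  fixes f :: "'a \<Rightarrow> real^'n^'m"
  assumes "(f \<longlongrightarrow> A) F"
  shows "((\<lambda>t. f t *v x) \<longlongrightarrow> A *v x) F"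
  by (rule vec_tendstoI)
     (simp add: matrix_vector_mult_def, intro tendsto_intros assms)

lemma col_entry: "(G *v axis j 1) $ i = G $ i $ (j::'n) " for G :: "real^'n^'m"
  by (simp add: matrix_vector_mult_def axis_def if_distrib cong: if_cong)

lemma inv_bound:
  fixes N :: "real^'m^'m"
  assumes l: "l > 0" and hN: "\<And>v. l * norm v ^ 2 \<le> qf N v"
  shows "N ** matrix_inv N = mat 1" "matrix_inv N ** N = mat 1"
    "\<And>w. l * norm (matrix_inv N *v w) \<le> norm w"
proof -
  have pos: "v \<noteq> 0 \<Longrightarrow> qf N v > 0" for v
    using hN[of v] l by (smt (verit) mult_pos_pos zero_less_norm_iff zero_less_power)
  note pd = pd_invertible[OF pos]
  show NG: "N ** matrix_inv N = mat 1" and "matrix_inv N ** N = mat 1" using pd by auto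
  show "l * norm (matrix_inv N *v w) \<le> norm w" for w
  proof (cases "matrix_inv N *v w = 0")
    case True then show ?thesis by simp
  next
    case False
    define v where "v = matrix_inv N *v w"
    have Nv: "N *v v = w" by (simp add: v_def matrix_vector_mul_assoc NG)
    have "l * norm v ^ 2 \<le> v \<bullet> w" using hN[of v] by (simp add: qf_def Nv)
    also have "\<dots> \<le> norm v * norm w" by (rule Cauchy_Schwarz_ineq2[THEN abs_le_D1])
    finally have "norm v * (l * norm v) \<le> norm v * norm w" by (simp add: power2_eq_square algebra_simps)
    then show ?thesis using False by (simp add: v_def)
  qed
qed

lemma tendsto_matrix_inv:
  fixes f :: "'a \<Rightarrow> real^'m^'m"
  assumes lim: "(f \<longlongrightarrow> M) F" and l: "l > 0"
    and ev: "eventually (\<lambda>t. \<forall>v. l * norm v ^ 2 \<le> qf (f t) v) F"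
    and hM: "\<And>v. l * norm v ^ 2 \<le> qf M v"
  shows "((\<lambda>t. matrix_inv (f t)) \<longlongrightarrow> matrix_inv M) F"
proof -
  note iM = inv_bound[OF l hM]
  have vec: "((\<lambda>t. matrix_inv (f t) *v w) \<longlongrightarrow> matrix_inv M *v w) F" for w
  proof -
    define y where "y = matrix_inv M *v w"
    have "eventually (\<lambda>t. norm (matrix_inv (f t) *v w - matrix_inv M *v w)
             \<le> norm ((M - f t) *v y) / l) F"
      using ev
    proof (rule eventually_mono)
      fix t assume elim: "\<forall>v. l * norm v ^ 2 \<le> qf (f t) v"
      have hN: "\<And>v. l * norm v ^ 2 \<le> qf (f t) v" using elim by blast
      note iN = inv_bound[OF l hN]
      have a: "M *v y = w" by (simp add: y_def matrix_vector_mul_assoc iM(1))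
      have b: "matrix_inv (f t) *v (f t *v y) = y"
        by (simp add: matrix_vector_mul_assoc iN(2))
      have "matrix_inv (f t) *v ((M - f t) *v y) = matrix_inv (f t) *v (M *v y - f t *v y)"
        by (simp add: matrix_vector_mult_diff_rdistrib)
      also have "\<dots> = matrix_inv (f t) *v w - matrix_inv M *v w"
        unfolding matrix_vector_mult_diff_distrib a b by (simp add: y_def)
      finally have eq: "matrix_inv (f t) *v ((M - f t) *v y) = matrix_inv (f t) *v w - matrix_inv M *v w" .
      have "l * norm (matrix_inv (f t) *v ((M - f t) *v y)) \<le> norm ((M - f t) *v y)"
        by (rule iN(3))
      then have "norm (matrix_inv (f t) *v w - matrix_inv M *v w) * l \<le> norm ((M - f t) *v y)"
        unfolding eq by (simp only: mult.commute)
      then show "norm (matrix_inv (f t) *v w - matrix_inv M *v w) \<le> norm ((M - f t) *v y) / l"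
        using l by (simp only: pos_le_divide_eq)
    qed
    moreover have "((\<lambda>t. norm ((M - f t) *v y) / l) \<longlongrightarrow> norm ((M - M) *v y) / l) F"
      by (intro tendsto_divide tendsto_norm tendsto_mv tendsto_diff tendsto_const lim) (use l in simp)
    then have "((\<lambda>t. norm ((M - f t) *v y) / l) \<longlongrightarrow> 0) F" by simp
    ultimately have "((\<lambda>t. matrix_inv (f t) *v w - matrix_inv M *v w) \<longlongrightarrow> 0) F"
      by (rule Lim_null_comparison)
    then show ?thesis by (rule Lim_null[THEN iffD2])
  qed
  show ?thesis
  proof (rule vec_tendstoI, rule vec_tendstoI)
    fix i j
    have "((\<lambda>t. (matrix_inv (f t) *v axis j 1) $ i) \<longlongrightarrow> (matrix_inv M *v axis j 1) $ i) F"
      by (rule tendsto_vec_nth[OF vec])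
    then show "((\<lambda>t. matrix_inv (f t) $ i $ j) \<longlongrightarrow> matrix_inv M $ i $ j) F"
      by (simp add: col_entry)
  qed
qed

lemma tendsto_qf [tendsto_intros]:
  "(f \<longlongrightarrow> M) F \<Longrightarrow> ((\<lambda>t. qf (f t) x) \<longlongrightarrow> qf M x) F"
  unfolding qf_def by (intro tendsto_intros)

lemma norm_le_sum_vec: "norm (x::'a::real_normed_vector^'n) \<le> (\<Sum>i\<in>UNIV. norm (x$i))"
  by (simp add: norm_vec_def L2_set_le_sum)

lemma entry_bound:
  fixes X Y :: "real^'n^'n"
  assumes "sym_mat X" "\<And>v. 0 \<le> qf X v" "\<And>v. qf X v \<le> qf Y v"
  shows "\<bar>4 * X $ i $ j\<bar> \<le> qf Y (axis i 1 + axis j 1) + qf Y (axis i 1 - axis j 1)"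
proof -
  define u :: "real^'n" where "u = axis i 1"
  define v :: "real^'n" where "v = axis j 1"
  have s: "v \<bullet> (X *v u) = u \<bullet> (X *v v)" using dot_sym[OF assms(1), of v u] by (simp add: inner_commute)
  have p: "qf X (u + v) = qf X u + qf X v + 2 * (u \<bullet> (X *v v))"
    by (simp add: qf_def matrix_vector_right_distrib inner_add_left inner_add_right s)
  have m: "qf X (u - v) = qf X u + qf X v - 2 * (u \<bullet> (X *v v))"
    by (simp add: qf_def matrix_vector_mult_diff_distrib inner_diff_left inner_diff_right s)
  have e: "u \<bullet> (X *v v) = X $ i $ j" by (simp add: u_def v_def inner_axis' col_entry)
  have t1: "4 * (u \<bullet> (X *v v)) \<le> qf Y (u + v) + qf Y (u - v)"
    using p m assms(2)[of "u+v"] assms(2)[of "u-v"] assms(3)[of "u+v"] assms(3)[of "u-v"] by linarith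
  have t2: "- (4 * (u \<bullet> (X *v v))) \<le> qf Y (u + v) + qf Y (u - v)"
    using p m assms(2)[of "u+v"] assms(2)[of "u-v"] assms(3)[of "u+v"] assms(3)[of "u-v"] by linarith
  have e': "axis i 1 \<bullet> (X *v axis j 1) = X $ i $ j" using e by (simp add: u_def v_def)
  show ?thesis using t1 t2 unfolding u_def v_def e' abs_le_iff by blast
qed



theorem lemma4:
  fixes A :: "real^'n^'n" and B :: "real^'m^'n" and Q :: "real^'n^'n" and R :: "real^'m^'m"
    and q q_c :: real
  assumes "stabilizable A B"
    and "pos_def Q" and "pos_def R"
    and "0 < q" and "q < 1"
    and "q_c \<le> 1"
    and "\<forall>p\<in>{0..<q_c}. \<exists>!X. pos_def X \<and> mare A B Q R p X"
    and "q < q_c"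
  shows "((\<lambda>qh. mare_sol A B Q R qh) \<longlongrightarrow> mare_sol A B Q R q) (at q within {0..<q_c})"
proof -
  note Qpd = assms(2) and Rpd = assms(3)
  define P where "P = (\<lambda>p. mare_sol A B Q R p)"
  have sol: "pos_def (P p) \<and> mare A B Q R p (P p)" if "p \<in> {0..<q_c}" for p
  proof -
    have "\<exists>!X. pos_def X \<and> mare A B Q R p X" using assms(7) that by blast
    then show ?thesis unfolding P_def mare_sol_def by (rule theI')
  qed
  have uniq: "X = P p" if "p \<in> {0..<q_c}" "pos_def X" "mare A B Q R p X" for p X
  proof -
    have "\<exists>!X. pos_def X \<and> mare A B Q R p X" using assms(7) that by blast
    then show ?thesis unfolding P_def mare_sol_def using that by (simp add: the1_equality)
  qed
  define q' where "q' = (q + q_c) / 2"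
  have q': "q < q'" "q' < q_c" "0 \<le> q'" "q' \<le> 1" using assms by (auto simp: q'_def)
  define Y where "Y = P q'"
  have Y: "pos_def Y" "mare A B Q R q' Y" using sol[of q'] q' by (auto simp: Y_def)
  define S where "S = {0..q'}"
  have S_sub: "S \<subseteq> {0..<q_c}" using q' by (auto simp: S_def)
  define T where "T = {X. sym_mat X \<and> (\<forall>v. qf Q v \<le> qf X v \<and> qf X v \<le> qf Y v)}"
  have into: "P \<in> S \<rightarrow> T"
  proof
    fix p assume p: "p \<in> S"
    then have pp: "0 \<le> p" "p \<le> q'" by (auto simp: S_def)
    have s: "pos_def (P p)" "mare A B Q R p (P p)" using sol[of p] p S_sub by auto
    show "P p \<in> T"
      unfolding T_def using pd_sym[OF s(1)] lower[OF s(1) Rpd s(2) pp(1)] pp q'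
        mono_sol[OF Qpd Rpd s(1) Y(1) s(2) Y(2) pp(1) pp(2) q'(4)]
      by auto
  qed
  have Tpsd: "0 \<le> qf X v" if "X \<in> T" for X v
    using that pd_psd[OF Qpd, of v] unfolding T_def by (metis (mono_tags, lifting) mem_Collect_eq order_trans)
  have closedT: "closed T"
    unfolding closed_sequential_limits
  proof (intro allI impI, elim conjE)
    fix X l assume XT: "\<forall>n. X n \<in> T" and lim: "X \<longlonglongrightarrow> l"
    have "(\<lambda>n. transpose (X n)) \<longlonglongrightarrow> transpose l" by (rule tendsto_transpose[OF lim])
    moreover have "(\<lambda>n. transpose (X n)) = X" using XT by (auto simp: T_def sym_mat_def)
    ultimately have "transpose l = l" using lim LIMSEQ_unique by metis
    moreover have "qf Q v \<le> qf l v" for v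
      by (rule LIMSEQ_le_const[OF tendsto_qf[OF lim]]) (use XT in \<open>auto simp: T_def\<close>)
    moreover have "qf l v \<le> qf Y v" for v
      by (rule LIMSEQ_le_const2[OF tendsto_qf[OF lim]]) (use XT in \<open>auto simp: T_def\<close>)
    ultimately show "l \<in> T" by (auto simp: T_def sym_mat_def)
  qed
  define K where "K i j = qf Y (axis i 1 + axis j 1) + qf Y (axis i 1 - axis j 1)" for i j :: 'n
  have boundedT: "bounded T"
    unfolding bounded_iff
  proof (intro exI ballI)
    fix X assume X: "X \<in> T"
    have eb: "\<bar>X $ i $ j\<bar> \<le> K i j / 4" for i j
    proof -
      have "\<bar>4 * X $ i $ j\<bar> \<le> K i j" unfolding K_def
        by (rule entry_bound) (use X Tpsd in \<open>auto simp: T_def\<close>)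
      then show ?thesis by (simp add: abs_mult)
    qed
    have "norm X \<le> (\<Sum>i\<in>UNIV. norm (X $ i))" by (rule norm_le_sum_vec)
    also have "\<dots> \<le> (\<Sum>i\<in>UNIV. \<Sum>j\<in>UNIV. K i j / 4)"
    proof (rule sum_mono)
      fix i
      have "norm (X $ i) \<le> (\<Sum>j\<in>UNIV. norm (X $ i $ j))" by (rule norm_le_sum_vec)
      also have "\<dots> \<le> (\<Sum>j\<in>UNIV. K i j / 4)" by (rule sum_mono) (use eb in auto)
      finally show "norm (X $ i) \<le> (\<Sum>j\<in>UNIV. K i j / 4)" .
    qed
    finally show "norm X \<le> (\<Sum>i\<in>UNIV. \<Sum>j\<in>UNIV. K i j / 4)" .
  qed
  have compactT: "compact T" using boundedT closedT by (simp add: compact_eq_bounded_closed)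
  obtain lR where lR: "lR > 0" "\<And>v. lR * norm v ^ 2 \<le> qf R v" using qf_lower[OF Rpd] by blast
  have lowM: "lR * norm v ^ 2 \<le> qf (R + transpose B ** X ** B) v" if "X \<in> T" for X v
    using lR(2)[of v] Tpsd[OF that, of "B *v v"] by (simp add: qf_add qf_congr)
  have closedG: "closed ((\<lambda>x. (x, P x)) ` S)"
    unfolding closed_sequential_limits
  proof (intro allI impI, elim conjE)
    fix z l assume zin: "\<forall>n. z n \<in> (\<lambda>x. (x, P x)) ` S" and lim: "z \<longlonglongrightarrow> l"
    obtain x where x: "\<And>n. x n \<in> S" "\<And>n. z n = (x n, P (x n))"
      using zin by (auto simp: image_iff) metis
    define a where "a = fst l"
    define b where "b = snd l"
    have limx: "x \<longlonglongrightarrow> a" using tendsto_fst[OF lim] by (simp add: x(2) a_def)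
    have limG: "(\<lambda>n. P (x n)) \<longlonglongrightarrow> b" using tendsto_snd[OF lim] by (simp add: x(2) b_def)
    have xs: "\<forall>n. x n \<in> {0..q'}" using x(1) by (simp add: S_def)
    have aS: "a \<in> S"
      using closed_sequential_limits[THEN iffD1, OF closed_atLeastAtMost[of 0 q'], rule_format, of x a] xs limx
      unfolding S_def by blast
    have GT: "P (x n) \<in> T" for n using into x(1) by auto
    have bT: "b \<in> T" using closedT[unfolded closed_sequential_limits, rule_format, of "\<lambda>n. P (x n)" b] GT limG by blast
    have bpd: "pos_def b"
    proof -
      have "x \<noteq> 0 \<Longrightarrow> x \<bullet> (b *v x) > 0" for x
        using bT pos_def_def[of Q] Qpd by (auto simp: T_def qf_def) (smt (verit))
      then show ?thesis using bT by (auto simp: pos_def_def T_def)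
    qed
    have limInv: "(\<lambda>n. matrix_inv (R + transpose B ** P (x n) ** B)) \<longlonglongrightarrow>
        matrix_inv (R + transpose B ** b ** B)"
    proof (rule tendsto_matrix_inv[OF _ lR(1)])
      show "(\<lambda>n. R + transpose B ** P (x n) ** B) \<longlonglongrightarrow> R + transpose B ** b ** B"
        by (intro tendsto_add tendsto_const tendsto_matmul limG)
      show "\<forall>\<^sub>F n in sequentially. \<forall>v. lR * norm v ^ 2 \<le> qf (R + transpose B ** P (x n) ** B) v"
        using lowM[OF GT] by simp
      show "lR * norm v ^ 2 \<le> qf (R + transpose B ** b ** B) v" for v using lowM[OF bT] .
    qed
    have limF: "(\<lambda>n. Q + transpose A ** P (x n) ** A
         - (1 - x n) *\<^sub>R (transpose A ** P (x n) ** B ** matrix_inv (R + transpose B ** P (x n) ** B)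
                          ** transpose B ** P (x n) ** A))
      \<longlonglongrightarrow> Q + transpose A ** b ** A
         - (1 - a) *\<^sub>R (transpose A ** b ** B ** matrix_inv (R + transpose B ** b ** B)
                          ** transpose B ** b ** A)"
      by (intro tendsto_add tendsto_diff tendsto_scaleR tendsto_matmul tendsto_const limG limInv limx)
    have eqn: "P (x n) = Q + transpose A ** P (x n) ** A
         - (1 - x n) *\<^sub>R (transpose A ** P (x n) ** B ** matrix_inv (R + transpose B ** P (x n) ** B)
                          ** transpose B ** P (x n) ** A)" for n
      using sol[of "x n"] x(1)[of n] S_sub by (auto simp: mare_def)
    have "b = Q + transpose A ** b ** A
         - (1 - a) *\<^sub>R (transpose A ** b ** B ** matrix_inv (R + transpose B ** b ** B)
                          ** transpose B ** b ** A)"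
      using LIMSEQ_unique[OF limG] limF unfolding eqn[symmetric] by blast
    then have "mare A B Q R a b" by (simp add: mare_def)
    then have "b = P a" using uniq[of a b] aS S_sub bpd by auto
    then have "l = (a, P a)" by (simp add: a_def b_def prod_eq_iff)
    then show "l \<in> (\<lambda>x. (x, P x)) ` S" using aS by auto
  qed
  have cont: "continuous_on S P"
    by (rule continuous_from_closed_graph[OF compactT into closedG])
  have qS: "q \<in> S" using assms q' by (auto simp: S_def)
  have "(P \<longlongrightarrow> P q) (at q within S)"
    using cont qS by (simp add: continuous_on_def)
  moreover have "eventually (\<lambda>x. x \<in> S \<longleftrightarrow> x \<in> {0..<q_c}) (at q)"
    unfolding eventually_at
  proof (intro exI[of _ "q' - q"] conjI ballI impI)
    show "0 < q' - q" using q' by simp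
    fix x :: real assume "x \<in> UNIV" "x \<noteq> q \<and> dist x q < q' - q"
    then have "x < q'" by (auto simp: dist_real_def)
    then show "x \<in> S \<longleftrightarrow> x \<in> {0..<q_c}" using q' by (auto simp: S_def)
  qed
  ultimately have "(P \<longlongrightarrow> P q) (at q within {0..<q_c})"
    by (rule Lim_transform_within_set)
  then show ?thesis by (simp add: P_def)
qed


end
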